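(* In the setting described in the context (consecutive Newton–Anderson iterates $x_{k-1},x_k,x_{k+1}$ with $x_k,x_{k-1}\in B_{\hat r}(x^* )\setminus S$ under Assumption (A)), if the set $R^e_{k+1}$ is nonempty then its minimum $r^e_{k+1}$ satisfies $r^e_{k+1}\le 1$.
   Context: $f:\mathbb{R}^n\to\mathbb{R}^n$ is $C^3$ with $f(x^* )=0$; norms are Euclidean; $N=\operatorname{null}f'(x^* )\neq\{0\}$, $R=\operatorname{range}f'(x^* )$, $\mathbb{R}^n=N\oplus R$, $P_N,P_R$ orthogonal projections; $S=\{x:\det f'(x)=0\}$. Iterates: $e_k=x_k-x^*$, $w_{k+1}=-f'(x_k)^{-1}f(x_k)$; Newton–Anderson: $x_1=x_0+w_1$, and for $k\ge1$, $\gamma_{k+1}=(w_{k+1}-w_k)^Tw_{k+1}/\|w_{k+1}-w_k\|^2$, $x_{k+1}=x_k+w_{k+1}-\gamma_{k+1}(x_k-x_{k-1}+w_{k+1}-w_k)$. $\hat D(x):N\to N$, $v\mapsto P_Nf''(x^* )(x-x^*,v)$. Assumption (A): for $x\in B_{\hat r}(x^* )\setminus S$, $\hat D(x)$ is invertible on $N$, and $f'(x)^{-1}=\hat D(x)^{-1}P_N+\mathcal{O}(1)$ for $\|x-x^*\|<\hat r$. $T_kv=\tfrac12\hat D(x_k)^{-1}P_Nf''(x_k)(e_k,v)$ (range in $N$). Set $q_{k-1}^k:=e_{k+1}-\tfrac12\big((1-\gamma_{k+1})P_Ne_k+\gamma_{k+1}P_Ne_{k-1}\big)-\big((1-\gamma_{k+1})T_kP_Re_k+\gamma_{k+1}T_{k-1}P_Re_{k-1}\big)$.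 Define the five vectors $a_1=\tfrac{1-\gamma_{k+1}}{2}P_Ne_k$, $a_2=\tfrac{\gamma_{k+1}}{2}P_Ne_{k-1}$, $a_3=(1-\gamma_{k+1})T_kP_Re_k$, $a_4=\gamma_{k+1}T_{k-1}P_Re_{k-1}$, $a_5=P_Nq_{k-1}^k$, so that $P_Ne_{k+1}=a_1+\dots+a_5$. $S^e_{k+1}$ is the set of sums $\sum_{i\in I}a_i$ over nonempty proper subsets $I\subsetneq\{1,\dots,5\}$; $R^e_{k+1}=\{\|P_Ne_{k+1}-E\|/\|E\|:E\in S^e_{k+1},\,E\ne0\}$, and $r^e_{k+1}=\min R^e_{k+1}$. *)

theory Defs
  imports "HOL-Analysis.Analysis"
begin

definition orth_proj :: "(real^'n) set \<Rightarrow> real^'n \<Rightarrow> real^'n" where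
  "orth_proj V v = (THE p. p \<in> V \<and> (\<forall>w\<in>V. inner (v - p) w = 0))"

text \<open>f is C^3 on R^n with Jacobian J (f'(x) = J x) and second derivative H
  (f''(x)(u,v) = H x u v, the derivative of y |-> f'(y) v in direction u),
  and a continuous third derivative.\<close>
definition C3_with :: "(real^'n \<Rightarrow> real^'n) \<Rightarrow> (real^'n \<Rightarrow> real^'n^'n)
    \<Rightarrow> (real^'n \<Rightarrow> real^'n \<Rightarrow> real^'n \<Rightarrow> real^'n) \<Rightarrow> bool" where
  "C3_with f J H \<longleftrightarrow>
     (\<forall>x. (f has_derivative (\<lambda>h. J x *v h)) (at x)) \<and>
     (\<forall>x v. ((\<lambda>y. J y *v v) has_derivative (\<lambda>u. H x u v)) (at x)) \<and>
     (\<exists>T3. (\<forall>x u v. ((\<lambda>y. H y u v) has_derivative (\<lambda>w. T3 x w u v)) (at x)) \<and>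
           (\<forall>w u v. continuous_on UNIV (\<lambda>x. T3 x w u v)))"

definition NA_w :: "(real^'n \<Rightarrow> real^'n) \<Rightarrow> (real^'n \<Rightarrow> real^'n^'n) \<Rightarrow> (nat \<Rightarrow> real^'n) \<Rightarrow> nat \<Rightarrow> real^'n" where
  "NA_w f J x k = - (matrix_inv (J (x (k - 1))) *v f (x (k - 1)))"

definition NA_gamma :: "(real^'n \<Rightarrow> real^'n) \<Rightarrow> (real^'n \<Rightarrow> real^'n^'n) \<Rightarrow> (nat \<Rightarrow> real^'n) \<Rightarrow> nat \<Rightarrow> real" where
  "NA_gamma f J x k =
     inner (NA_w f J x k - NA_w f J x (k - 1)) (NA_w f J x k) / (norm (NA_w f J x k - NA_w f J x (k - 1)))\<^sup>2"

definition newton_anderson :: "(real^'n \<Rightarrow> real^'n) \<Rightarrow> (real^'n \<Rightarrow> real^'n^'n) \<Rightarrow> (nat \<Rightarrow> real^'n) \<Rightarrow> bool" where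
  "newton_anderson f J x \<longleftrightarrow>
     x 1 = x 0 + NA_w f J x 1 \<and>
     (\<forall>k\<ge>1. x (k + 1) = x k + NA_w f J x (k + 1)
        - NA_gamma f J x (k + 1) *\<^sub>R (x k - x (k - 1) + NA_w f J x (k + 1) - NA_w f J x k))"

definition nullsp :: "(real^'n \<Rightarrow> real^'n^'n) \<Rightarrow> real^'n \<Rightarrow> (real^'n) set" where
  "nullsp J xs = {v. J xs *v v = 0}"

definition rangesp :: "(real^'n \<Rightarrow> real^'n^'n) \<Rightarrow> real^'n \<Rightarrow> (real^'n) set" where
  "rangesp J xs = range (\<lambda>v. J xs *v v)"

definition singset :: "(real^'n \<Rightarrow> real^'n^'n) \<Rightarrow> (real^'n) set" where
  "singset J = {x. det (J x) = 0}"

definition Dhat :: "(real^'n \<Rightarrow> real^'n^'n) \<Rightarrow> (real^'n \<Rightarrow> real^'n \<Rightarrow> real^'n \<Rightarrow> real^'n)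
    \<Rightarrow> real^'n \<Rightarrow> real^'n \<Rightarrow> real^'n \<Rightarrow> real^'n" where
  "Dhat J H xs x v = orth_proj (nullsp J xs) (H xs (x - xs) v)"

definition Dhat_inv :: "(real^'n \<Rightarrow> real^'n^'n) \<Rightarrow> (real^'n \<Rightarrow> real^'n \<Rightarrow> real^'n \<Rightarrow> real^'n)
    \<Rightarrow> real^'n \<Rightarrow> real^'n \<Rightarrow> real^'n \<Rightarrow> real^'n" where
  "Dhat_inv J H xs x = inv_into (nullsp J xs) (Dhat J H xs x)"

definition assumption_A :: "(real^'n \<Rightarrow> real^'n^'n) \<Rightarrow> (real^'n \<Rightarrow> real^'n \<Rightarrow> real^'n \<Rightarrow> real^'n)
    \<Rightarrow> real^'n \<Rightarrow> real \<Rightarrow> bool" where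
  "assumption_A J H xs rhat \<longleftrightarrow>
     (\<forall>x \<in> ball xs rhat - singset J.
        bij_betw (Dhat J H xs x) (nullsp J xs) (nullsp J xs)) \<and>
     (\<exists>C. \<forall>x \<in> ball xs rhat - singset J. \<forall>v.
        norm (matrix_inv (J x) *v v - Dhat_inv J H xs x (orth_proj (nullsp J xs) v)) \<le> C * norm v)"

definition T_op :: "(real^'n \<Rightarrow> real^'n^'n) \<Rightarrow> (real^'n \<Rightarrow> real^'n \<Rightarrow> real^'n \<Rightarrow> real^'n)
    \<Rightarrow> real^'n \<Rightarrow> real^'n \<Rightarrow> real^'n \<Rightarrow> real^'n" where
  "T_op J H xs xk v = (1/2) *\<^sub>R Dhat_inv J H xs xk (orth_proj (nullsp J xs) (H xk (xk - xs) v))"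

definition avec :: "(real^'n \<Rightarrow> real^'n) \<Rightarrow> (real^'n \<Rightarrow> real^'n^'n) \<Rightarrow> (real^'n \<Rightarrow> real^'n \<Rightarrow> real^'n \<Rightarrow> real^'n)
    \<Rightarrow> real^'n \<Rightarrow> (nat \<Rightarrow> real^'n) \<Rightarrow> nat \<Rightarrow> nat \<Rightarrow> real^'n" where
  "avec f J H xs x k i =
    (let PN = orth_proj (nullsp J xs); PR = orth_proj (rangesp J xs);
         e = (\<lambda>j. x j - xs); g = NA_gamma f J x (k + 1);
         q = e (k + 1) - (1/2) *\<^sub>R ((1 - g) *\<^sub>R PN (e k) + g *\<^sub>R PN (e (k - 1)))
               - ((1 - g) *\<^sub>R T_op J H xs (x k) (PR (e k))
                  + g *\<^sub>R T_op J H xs (x (k - 1)) (PR (e (k - 1))))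
     in if i = 1 then ((1 - g) / 2) *\<^sub>R PN (e k)
        else if i = 2 then (g / 2) *\<^sub>R PN (e (k - 1))
        else if i = 3 then (1 - g) *\<^sub>R T_op J H xs (x k) (PR (e k))
        else if i = 4 then g *\<^sub>R T_op J H xs (x (k - 1)) (PR (e (k - 1)))
        else PN q)"

definition Se_set where
  "Se_set f J H xs x k =
     {(\<Sum>i\<in>I. avec f J H xs x k i) | I. I \<subseteq> {1..5::nat} \<and> I \<noteq> {} \<and> I \<noteq> {1..5}}"

definition Re_set where
  "Re_set f J H xs x k =
     {norm (orth_proj (nullsp J xs) (x (k + 1) - xs) - E) / norm E | E.
        E \<in> Se_set f J H xs x k \<and> E \<noteq> 0}"

end

theory Submission imports Defs begin
lemma orth_proj_char:
  fixes V :: "(real^'n) set"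
  assumes "subspace V"
  shows "orth_proj V v \<in> V \<and> (\<forall>w\<in>V. inner (v - orth_proj V v) w = 0)"
proof -
  obtain y z where yz: "y \<in> span V" "\<forall>w\<in>span V. orthogonal z w" "v = y + z"
    using orthogonal_subspace_decomp_exists[of V v] by metis
  have sp: "span V = V" using assms by (rule span_eq_iff[THEN iffD2])
  have ex: "y \<in> V \<and> (\<forall>w\<in>V. inner (v - y) w = 0)"
  proof
    show "y \<in> V" using yz(1) sp by simp
    show "\<forall>w\<in>V. inner (v - y) w = 0"
    proof
      fix w assume "w \<in> V"
      then have "orthogonal z w" using yz(2) sp by simp
      then show "inner (v - y) w = 0" using yz(3) by (simp add: orthogonal_def)
    qed
  qed
  have un: "p = y" if "p \<in> V" "\<forall>w\<in>V. inner (v - p) w = 0" for p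
  proof -
    have d: "p - y \<in> V" using that(1) ex assms by (simp add: subspace_diff)
    have "inner (v - p) (p - y) = 0" using that d by simp
    moreover have "inner (v - y) (p - y) = 0" using ex d by simp
    ultimately have "inner (p - y) (p - y) = 0" by (simp add: inner_diff_left)
    then show ?thesis by simp
  qed
  have "orth_proj V v = y" unfolding orth_proj_def
    by (rule the_equality) (use ex un in blast)+
  then show ?thesis using ex by simp
qed
lemma orth_proj_unique:
  fixes V :: "(real^'n) set"
  assumes "subspace V" "p \<in> V" "\<forall>w\<in>V. inner (v - p) w = 0"
  shows "orth_proj V v = p"
proof -
  have c: "orth_proj V v \<in> V \<and> (\<forall>w\<in>V. inner (v - orth_proj V v) w = 0)"
    by (rule orth_proj_char[OF assms(1)])
  have d: "p - orth_proj V v \<in> V" using assms c by (simp add: subspace_diff)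
  have "inner (v - p) (p - orth_proj V v) = 0" "inner (v - orth_proj V v) (p - orth_proj V v) = 0"
    using assms c d by auto
  then have "inner (p - orth_proj V v) (p - orth_proj V v) = 0" by (simp add: inner_diff_left)
  then show ?thesis by simp
qed

lemma orth_proj_id:
  fixes V :: "(real^'n) set"
  assumes "subspace V" "v \<in> V" shows "orth_proj V v = v"
  using orth_proj_unique[OF assms(1) assms(2)] by simp

lemma orth_proj_diff:
  fixes V :: "(real^'n) set"
  assumes "subspace V" shows "orth_proj V (u - v) = orth_proj V u - orth_proj V v"
proof (rule orth_proj_unique[OF assms])
  have cu: "orth_proj V u \<in> V \<and> (\<forall>w\<in>V. inner (u - orth_proj V u) w = 0)"
    and cv: "orth_proj V v \<in> V \<and> (\<forall>w\<in>V. inner (v - orth_proj V v) w = 0)"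
    using orth_proj_char[OF assms] by auto
  show "orth_proj V u - orth_proj V v \<in> V" using cu cv assms by (simp add: subspace_diff)
  show "\<forall>w\<in>V. inner (u - v - (orth_proj V u - orth_proj V v)) w = 0"
  proof
    fix w assume "w \<in> V"
    then have "inner (u - orth_proj V u) w - inner (v - orth_proj V v) w = 0" using cu cv by simp
    then show "inner (u - v - (orth_proj V u - orth_proj V v)) w = 0"
      by (simp add: inner_diff_left algebra_simps)
  qed
qed

lemma orth_proj_add:
  fixes V :: "(real^'n) set"
  assumes "subspace V" shows "orth_proj V (u + v) = orth_proj V u + orth_proj V v"
proof (rule orth_proj_unique[OF assms])
  have cu: "orth_proj V u \<in> V \<and> (\<forall>w\<in>V. inner (u - orth_proj V u) w = 0)"
    and cv: "orth_proj V v \<in> V \<and> (\<forall>w\<in>V. inner (v - orth_proj V v) w = 0)"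
    using orth_proj_char[OF assms] by auto
  show "orth_proj V u + orth_proj V v \<in> V" using cu cv assms by (simp add: subspace_add)
  show "\<forall>w\<in>V. inner (u + v - (orth_proj V u + orth_proj V v)) w = 0"
  proof
    fix w assume "w \<in> V"
    then have "inner (u - orth_proj V u) w + inner (v - orth_proj V v) w = 0" using cu cv by simp
    then show "inner (u + v - (orth_proj V u + orth_proj V v)) w = 0"
      by (simp add: inner_diff_left inner_add_left algebra_simps)
  qed
qed

lemma orth_proj_scale:
  fixes V :: "(real^'n) set"
  assumes "subspace V" shows "orth_proj V (c *\<^sub>R u) = c *\<^sub>R orth_proj V u"
proof (rule orth_proj_unique[OF assms])
  have cu: "orth_proj V u \<in> V \<and> (\<forall>w\<in>V. inner (u - orth_proj V u) w = 0)"
    using orth_proj_char[OF assms] by auto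
  show "c *\<^sub>R orth_proj V u \<in> V" using cu assms by (simp add: subspace_scale)
  show "\<forall>w\<in>V. inner (c *\<^sub>R u - c *\<^sub>R orth_proj V u) w = 0"
  proof
    fix w assume "w \<in> V"
    then have "inner (u - orth_proj V u) w = 0" using cu by simp
    then have "c * inner (u - orth_proj V u) w = 0" by simp
    then show "inner (c *\<^sub>R u - c *\<^sub>R orth_proj V u) w = 0"
      by (simp add: inner_diff_left algebra_simps)
  qed
qed

lemma subspace_nullsp: "subspace (nullsp J xs)"
  unfolding nullsp_def subspace_def by (simp add: matrix_vector_right_distrib matrix_vector_mult_scaleR)

theorem lemma4p1:
  fixes f :: "real^'n \<Rightarrow> real^'n" and J :: "real^'n \<Rightarrow> real^'n^'n"
    and H :: "real^'n \<Rightarrow> real^'n \<Rightarrow> real^'n \<Rightarrow> real^'n"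
    and xs :: "real^'n" and x :: "nat \<Rightarrow> real^'n" and rhat :: real and k :: nat
  assumes "C3_with f J H"
    and "f xs = 0"
    and "nullsp J xs \<noteq> {0}"
    and "nullsp J xs \<inter> rangesp J xs = {0}"
    and "\<forall>v. \<exists>a\<in>nullsp J xs. \<exists>b\<in>rangesp J xs. v = a + b"
    and "rhat > 0"
    and "assumption_A J H xs rhat"
    and "newton_anderson f J x"
    and "k \<ge> 1"
    and "x k \<in> ball xs rhat - singset J"
    and "x (k - 1) \<in> ball xs rhat - singset J"
    and "Re_set f J H xs x k \<noteq> {}"
  shows "Min (Re_set f J H xs x k) \<le> 1"
proof -
  define N where "N = nullsp J xs"
  define PN where "PN = orth_proj N"
  have sN: "subspace N" unfolding N_def by (rule subspace_nullsp)
  define a where "a = avec f J H xs x k"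
  define P where "P = PN (x (k + 1) - xs)"
  have bij: "\<And>y. y \<in> ball xs rhat - singset J \<Longrightarrow> bij_betw (Dhat J H xs y) N N"
    using assms(7) unfolding assumption_A_def N_def by blast
  have TN: "T_op J H xs y v \<in> N" if "y \<in> ball xs rhat - singset J" for y v
  proof -
    have "orth_proj N (H y (y - xs) v) \<in> N" using orth_proj_char[OF sN] by blast
    then have "orth_proj N (H y (y - xs) v) \<in> Dhat J H xs y ` N"
      using bij[OF that] by (simp add: bij_betw_def)
    then have "Dhat_inv J H xs y (orth_proj N (H y (y - xs) v)) \<in> N"
      unfolding Dhat_inv_def N_def[symmetric] by (rule inv_into_into)
    then show ?thesis unfolding T_op_def N_def[symmetric] using sN subspace_scale by blast
  qed
  have PNN: "PN u \<in> N" for u unfolding PN_def using orth_proj_char[OF sN] by blast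
  have PNid: "PN u = u" if "u \<in> N" for u unfolding PN_def using orth_proj_id[OF sN that] .
  have PNd: "PN (u - v) = PN u - PN v" for u v unfolding PN_def by (rule orth_proj_diff[OF sN])
  have PNa: "PN (u + v) = PN u + PN v" for u v unfolding PN_def by (rule orth_proj_add[OF sN])
  have PNs: "PN (c *\<^sub>R u) = c *\<^sub>R PN u" for c u unfolding PN_def by (rule orth_proj_scale[OF sN])
  define g where "g = NA_gamma f J x (k + 1)"
  define T1 where "T1 = T_op J H xs (x k) (orth_proj (rangesp J xs) (x k - xs))"
  define T2 where "T2 = T_op J H xs (x (k - 1)) (orth_proj (rangesp J xs) (x (k - 1) - xs))"
  have T1N: "T1 \<in> N" unfolding T1_def using TN assms(10) by blast
  have T2N: "T2 \<in> N" unfolding T2_def using TN assms(11) by blast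
  have a1: "a 1 = ((1 - g) / 2) *\<^sub>R PN (x k - xs)"
    unfolding a_def avec_def Let_def PN_def N_def g_def by simp
  have a2: "a 2 = (g / 2) *\<^sub>R PN (x (k - 1) - xs)"
    unfolding a_def avec_def Let_def PN_def N_def g_def by simp
  have a3: "a 3 = (1 - g) *\<^sub>R T1"
    unfolding a_def avec_def Let_def T1_def g_def by simp
  have a4: "a 4 = g *\<^sub>R T2"
    unfolding a_def avec_def Let_def T2_def g_def by simp
  have a5: "a 5 = PN (x (k + 1) - xs - (1/2) *\<^sub>R ((1 - g) *\<^sub>R PN (x k - xs) + g *\<^sub>R PN (x (k - 1) - xs))
               - ((1 - g) *\<^sub>R T1 + g *\<^sub>R T2))"
    unfolding a_def avec_def Let_def PN_def N_def g_def T1_def T2_def by simp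
  have a5': "a 5 = P - ((1 - g) / 2) *\<^sub>R PN (x k - xs) - (g / 2) *\<^sub>R PN (x (k - 1) - xs)
      - (1 - g) *\<^sub>R T1 - g *\<^sub>R T2"
  proof -
    have lin: "PN (A - (1/2) *\<^sub>R ((1 - g) *\<^sub>R PN u + g *\<^sub>R PN w) - ((1 - g) *\<^sub>R T1 + g *\<^sub>R T2))
       = PN A - ((1 - g) / 2) *\<^sub>R PN u - (g / 2) *\<^sub>R PN w - (1 - g) *\<^sub>R T1 - g *\<^sub>R T2" for A u w
      apply (simp add: PNd PNa PNs PNid PNN T1N T2N algebra_simps)
      apply (simp only: scaleR_left_distrib[symmetric])
      apply (simp add: field_simps)
      done
    show ?thesis unfolding a5 P_def by (rule lin)
  qed
  have sum5: "sum a {1..5} = a 1 + a 2 + a 3 + a 4 + a 5"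
    by (simp add: numeral_eq_Suc add.commute add.left_commute)
  have Psum: "P = sum a {1..5}"
    unfolding sum5 a1 a2 a3 a4 a5' by (simp add: algebra_simps)
  have Se: "Se_set f J H xs x k = {sum a I | I. I \<subseteq> {1..5} \<and> I \<noteq> {} \<and> I \<noteq> {1..5}}"
    unfolding Se_set_def a_def by simp
  have Re: "Re_set f J H xs x k = {norm (P - E) / norm E | E. E \<in> Se_set f J H xs x k \<and> E \<noteq> 0}"
    unfolding Re_set_def P_def PN_def N_def by simp
  have finSe: "finite (Se_set f J H xs x k)"
  proof -
    have "Se_set f J H xs x k \<subseteq> sum a ` Pow {1..5}" unfolding Se by blast
    then show ?thesis by (rule finite_subset) simp
  qed
  have finRe: "finite (Re_set f J H xs x k)"
  proof -
    have "Re_set f J H xs x k \<subseteq> (\<lambda>E. norm (P - E) / norm E) ` Se_set f J H xs x k" unfolding Re by blast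
    then show ?thesis using finSe by (meson finite_imageI finite_subset)
  qed
  obtain r where r: "r \<in> Re_set f J H xs x k" using assms(12) by blast
  then obtain I where I: "I \<subseteq> {1..5}" "I \<noteq> {}" "I \<noteq> {1..5}" "sum a I \<noteq> 0"
    and rdef: "r = norm (P - sum a I) / norm (sum a I)"
    unfolding Re Se by blast
  define I' where "I' = {1..5} - I"
  have split: "sum a {1..5} = sum a I + sum a I'"
    unfolding I'_def using I(1) by (metis add.commute finite_atLeastAtMost sum.subset_diff)
  have PE: "P - sum a I = sum a I'" using Psum split by simp
  have minr: "Min (Re_set f J H xs x k) \<le> r" using finRe r by simp
  show ?thesis
  proof (cases "r \<le> 1")
    case True then show ?thesis using minr by simp
  next
    case False
    then have gt: "norm (sum a I') > norm (sum a I)"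
      using rdef PE I(4) by (simp add: field_simps)
    then have nz: "sum a I' \<noteq> 0" by auto
    have I'p: "I' \<subseteq> {1..5}" "I' \<noteq> {}" "I' \<noteq> {1..5}"
      unfolding I'_def using I by auto
    have PE': "P - sum a I' = sum a I" using Psum split by simp
    have "norm (P - sum a I') / norm (sum a I') \<in> Re_set f J H xs x k"
      unfolding Re Se using I'p nz by blast
    moreover have "norm (P - sum a I') / norm (sum a I') \<le> 1"
      unfolding PE' using gt by (simp add: divide_le_eq_1)
    ultimately show ?thesis using finRe by (meson Min_le order_trans)
  qed
qed

end
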